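(* Let $\mathcal{G}$ be a connected, homogeneous, bidirected coupled cell network with cell set $\mathcal{C}=\{1,\dots,n\}$ and edge set $\mathcal{E}$, each cell having phase space $\mathbb{R}$. Let $f:\mathbb{R}^n\to\mathbb{R}^n$ be the $\mathcal{G}$-admissible vector field with components \[ f_c(x)=\sum_{d\in I(c)}\phi_{[(c,d)]}(x_d-x_c),\qquad c\in\mathcal{C}, \] where for each edge type $\xi$, $\phi_\xi:\mathbb{R}\to\mathbb{R}$ is an odd $C^1$ function. Suppose there exists $\varepsilon>0$ such that $\alpha\,\phi_\xi(\alpha)>0$ for all $\alpha\in(-\varepsilon,\varepsilon)\setminus\{0\}$ and all edge types $\xi$. Let $\Delta=\{x\in\mathbb{R}^n: x_1=\dots=x_n\}$ and let $\Omega=\{x\in\mathbb{R}^n:\operatorname{dist}(x,\Delta)<r\}$ be the largest open hypercylinder around $\Delta$ such that $x\in\Omega$ implies $|x_d-x_c|<\varepsilon$ for all $(c,d)\in\mathcal{E}$. Then: (i) $\Omega$ is invariant under the flow of $\dot x=f(x)$ (solutions starting in $\Omega$ remain in $\Omega$ for all positive times); (ii) for $x\in\Omega$, $f(x)=0$ if and only if $x\in\Delta$.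
   Context: A coupled cell network consists of cells $\mathcal{C}=\{1,\dots,n\}$, edges $\mathcal{E}\subset\mathcal{C}\times\mathcal{C}$ without loops, and an equivalence relation on edges (edge types; $[e]$ is the type of $e$) compatible with an equivalence relation on cells. The input set of $c$ is the set of edges $(d,c)\in\mathcal{E}$; one writes $d\in I(c)$ when $(d,c)\in\mathcal{E}$. Cells $c,d$ are input equivalent if there is an edge-type preserving bijection between their input sets; the network is homogeneous if all cells are input equivalent. It is bidirected if $(i,j)\in\mathcal{E}$ iff $(j,i)\in\mathcal{E}$, with $(i,j)$ and $(j,i)$ of the same type. Connected means the underlying graph is connected. Admissible maps have components depending only on the cell's own variable and its inputs, with identical functional form across input-equivalent cells, edges of the same type being treated identically. *)

theory Defs
  imports "HOL-Analysis.Analysis"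
begin

text \<open>Cells are the elements of a finite type 'n (so C = UNIV, n = CARD('n));
  an edge (d, c) runs from d to c.  Edge types are given by a labelling
  etyp :: 'n \<times> 'n \<Rightarrow> 'k (two edges have the same type iff same label);
  likewise cell types by ctyp :: 'n \<Rightarrow> 'c.\<close>

definition input_set :: "('n \<times> 'n) set \<Rightarrow> 'n \<Rightarrow> ('n \<times> 'n) set" where
  "input_set E c = {e \<in> E. snd e = c}"

definition coupled_cell_network ::
  "('n \<times> 'n) set \<Rightarrow> ('n \<times> 'n \<Rightarrow> 'k) \<Rightarrow> ('n \<Rightarrow> 'c) \<Rightarrow> bool" where
  "coupled_cell_network E etyp ctyp \<longleftrightarrow>
     (\<forall>c. (c, c) \<notin> E) \<and>
     (\<forall>e1\<in>E. \<forall>e2\<in>E. etyp e1 = etyp e2 \<longrightarrow>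
        ctyp (fst e1) = ctyp (fst e2) \<and> ctyp (snd e1) = ctyp (snd e2))"

definition input_equivalent ::
  "('n \<times> 'n) set \<Rightarrow> ('n \<times> 'n \<Rightarrow> 'k) \<Rightarrow> 'n \<Rightarrow> 'n \<Rightarrow> bool" where
  "input_equivalent E etyp c d \<longleftrightarrow>
     (\<exists>\<beta>. bij_betw \<beta> (input_set E c) (input_set E d) \<and>
          (\<forall>e \<in> input_set E c. etyp (\<beta> e) = etyp e))"

definition homogeneous :: "('n \<times> 'n) set \<Rightarrow> ('n \<times> 'n \<Rightarrow> 'k) \<Rightarrow> bool" where
  "homogeneous E etyp \<longleftrightarrow> (\<forall>c d. input_equivalent E etyp c d)"

definition bidirected :: "('n \<times> 'n) set \<Rightarrow> ('n \<times> 'n \<Rightarrow> 'k) \<Rightarrow> bool" where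
  "bidirected E etyp \<longleftrightarrow>
     (\<forall>i j. (i, j) \<in> E \<longleftrightarrow> (j, i) \<in> E) \<and> (\<forall>i j. (i, j) \<in> E \<longrightarrow> etyp (i, j) = etyp (j, i))"

definition network_connected :: "('n \<times> 'n) set \<Rightarrow> bool" where
  "network_connected E \<longleftrightarrow> (\<forall>c d. (c, d) \<in> (E \<union> E\<inverse>)\<^sup>*)"

definition diag :: "(real ^ 'n) set" where
  "diag = {x. \<forall>i j. x $ i = x $ j}"

definition hypercyl :: "real \<Rightarrow> (real ^ 'n) set" where
  "hypercyl r = {x. infdist x diag < r}"

text \<open>The largest open hypercylinder around the diagonal on which all coupled
  differences are below eps: the union of all such hypercylinders (which is
  itself such a hypercylinder, or the whole space when no radius bound exists).\<close>
definition max_cyl :: "('n \<times> 'n) set \<Rightarrow> real \<Rightarrow> (real ^ 'n) set" where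
  "max_cyl E eps = \<Union>{hypercyl r | r. \<forall>x \<in> hypercyl r. \<forall>(c, d) \<in> E. \<bar>x $ d - x $ c\<bar> < eps}"

end

theory Submission
  imports Defs
begin

lemma swap_E:
  fixes E :: "('n::finite \<times> 'n) set" and g :: "'n \<Rightarrow> 'n \<Rightarrow> real"
  assumes sym: "\<And>i j. (i,j)\<in>E \<longleftrightarrow> (j,i)\<in>E"
  shows "(\<Sum>c\<in>UNIV. \<Sum>d\<in>UNIV. if (d,c)\<in>E then g c d else 0) = (\<Sum>c\<in>UNIV. \<Sum>d\<in>UNIV. if (d,c)\<in>E then g d c else 0)"
proof -
  have "(\<Sum>c\<in>UNIV. \<Sum>d\<in>UNIV. if (d,c)\<in>E then g c d else 0) = (\<Sum>d\<in>UNIV. \<Sum>c\<in>UNIV. if (d,c)\<in>E then g c d else 0)"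
    by (rule sum.swap)
  also have "\<dots> = (\<Sum>c\<in>UNIV. \<Sum>d\<in>UNIV. if (d,c)\<in>E then g d c else 0)"
    by (intro sum.cong refl) (metis sym)
  finally show ?thesis .
qed

lemma antisym_sum:
  fixes E :: "('n::finite \<times> 'n) set" and g :: "'n \<Rightarrow> 'n \<Rightarrow> real"
  assumes sym: "\<And>i j. (i,j)\<in>E \<longleftrightarrow> (j,i)\<in>E"
    and anti: "\<And>c d. (d,c)\<in>E \<Longrightarrow> g d c = - g c d"
  shows "(\<Sum>c\<in>UNIV. \<Sum>d\<in>UNIV. if (d,c)\<in>E then g c d else 0) = 0"
    and "2 * (\<Sum>c\<in>UNIV. \<Sum>d\<in>UNIV. if (d,c)\<in>E then x c * g c d else 0)
         = (\<Sum>c\<in>UNIV. \<Sum>d\<in>UNIV. if (d,c)\<in>E then (x c - x d) * g c d else 0)"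
proof -
  have "(\<Sum>c\<in>UNIV. \<Sum>d\<in>UNIV. if (d,c)\<in>E then g c d else 0) = (\<Sum>c\<in>UNIV. \<Sum>d\<in>UNIV. if (d,c)\<in>E then g d c else 0)"
    by (rule swap_E[OF sym])
  also have "\<dots> = (\<Sum>c\<in>UNIV. \<Sum>d\<in>UNIV. if (d,c)\<in>E then - g c d else 0)"
    by (intro sum.cong refl) (simp add: anti)
  also have "\<dots> = - (\<Sum>c\<in>UNIV. \<Sum>d\<in>UNIV. if (d,c)\<in>E then g c d else 0)"
    by (simp add: sum_negf[symmetric] if_distrib cong: if_cong)
  finally show "(\<Sum>c\<in>UNIV. \<Sum>d\<in>UNIV. if (d,c)\<in>E then g c d else 0) = 0" by simp
next
  have "(\<Sum>c\<in>UNIV. \<Sum>d\<in>UNIV. if (d,c)\<in>E then x c * g c d else 0) = (\<Sum>c\<in>UNIV. \<Sum>d\<in>UNIV. if (d,c)\<in>E then x d * g d c else 0)"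
    by (rule swap_E[OF sym])
  also have "\<dots> = (\<Sum>c\<in>UNIV. \<Sum>d\<in>UNIV. if (d,c)\<in>E then - x d * g c d else 0)"
    by (intro sum.cong refl) (simp add: anti)
  finally have *: "(\<Sum>c\<in>UNIV. \<Sum>d\<in>UNIV. if (d,c)\<in>E then x c * g c d else 0) = (\<Sum>c\<in>UNIV. \<Sum>d\<in>UNIV. if (d,c)\<in>E then - x d * g c d else 0)" .
  have "2 * (\<Sum>c\<in>UNIV. \<Sum>d\<in>UNIV. if (d,c)\<in>E then x c * g c d else 0) =
     (\<Sum>c\<in>UNIV. \<Sum>d\<in>UNIV. if (d,c)\<in>E then x c * g c d else 0) + (\<Sum>c\<in>UNIV. \<Sum>d\<in>UNIV. if (d,c)\<in>E then - x d * g c d else 0)"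
    using * by simp
  also have "\<dots> = (\<Sum>c\<in>UNIV. \<Sum>d\<in>UNIV. if (d,c)\<in>E then (x c - x d) * g c d else 0)"
    unfolding sum.distrib[symmetric] by (intro sum.cong refl) (auto simp: algebra_simps)
  finally show "2 * (\<Sum>c\<in>UNIV. \<Sum>d\<in>UNIV. if (d,c)\<in>E then x c * g c d else 0)
         = (\<Sum>c\<in>UNIV. \<Sum>d\<in>UNIV. if (d,c)\<in>E then (x c - x d) * g c d else 0)" .
qed

definition ones :: "real ^ 'n" where "ones = (\<chi> i. 1)"
definition Vf :: "real ^ 'n::finite \<Rightarrow> real" where
  "Vf x = x \<bullet> x - (x \<bullet> ones)^2 / real CARD('n)"

lemma diag_eq: "{x::real^'n. \<forall>i j. x $ i = x $ j} = range (\<lambda>k. k *\<^sub>R ones)"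
proof (intro set_eqI iffI)
  fix x :: "real^'n" assume "x \<in> {x::real^'n. \<forall>i j. x $ i = x $ j}"
  hence "\<forall>i. x $ i = x $ undefined" by simp
  hence "x = (x $ undefined) *\<^sub>R ones" by (simp add: vec_eq_iff ones_def)
  thus "x \<in> range (\<lambda>k. k *\<^sub>R ones)" by (rule image_eqI) simp
next
  fix x :: "real^'n" assume "x \<in> range (\<lambda>k. k *\<^sub>R ones)"
  then obtain k where "x = k *\<^sub>R ones" by blast
  thus "x \<in> {x::real^'n. \<forall>i j. x $ i = x $ j}" by (simp add: ones_def)
qed

lemma aux: "(n::real) > 0 \<Longrightarrow> (n*k - q)^2 / n = n*k^2 - 2*k*q + q^2/n"
  by (simp add: power2_eq_square field_simps)

lemma dist_const_sq:
  fixes x :: "real ^ 'n::finite"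
  shows "(dist x (k *\<^sub>R ones))^2 = Vf x + (real CARD('n) * k - x \<bullet> ones)^2 / real CARD('n)"
proof -
  have oo: "ones \<bullet> (ones :: real^'n) = real CARD('n)" by (simp add: ones_def inner_vec_def)
  have "(dist x (k *\<^sub>R ones))^2 = (x - k *\<^sub>R ones) \<bullet> (x - k *\<^sub>R ones)"
    by (simp add: dist_norm power2_norm_eq_inner)
  also have "\<dots> = x \<bullet> x - k * (x \<bullet> ones) - k * (ones \<bullet> x) + k * k * ((ones::real^'n) \<bullet> ones)"
    by (simp add: inner_diff_left inner_diff_right algebra_simps)
  also have "\<dots> = x \<bullet> x - 2 * k * (x \<bullet> ones) + k^2 * real CARD('n)"
    by (simp add: oo inner_commute[of ones x] power2_eq_square)
  also have "\<dots> = Vf x + (real CARD('n) * k - x \<bullet> ones)^2 / real CARD('n)"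
    unfolding Vf_def by (subst aux) auto
  finally show ?thesis .
qed

lemma infdist_diag:
  fixes x :: "real ^ 'n::finite"
  shows "infdist x {x::real^'n. \<forall>i j. x $ i = x $ j} = sqrt (Vf x)"
proof -
  let ?m = "(x \<bullet> ones) / real CARD('n)"
  show ?thesis
  proof (rule antisym)
    have "infdist x (range (\<lambda>k. k *\<^sub>R ones)) \<le> dist x (?m *\<^sub>R ones)" by (rule infdist_le) auto
    also have "\<dots> = sqrt (Vf x)"
      using dist_const_sq[of x ?m] by (simp add: real_sqrt_unique)
    finally show "infdist x {x::real^'n. \<forall>i j. x $ i = x $ j} \<le> sqrt (Vf x)" by (simp add: diag_eq)
  next
    have "sqrt (Vf x) \<le> (INF a\<in>range (\<lambda>k. k *\<^sub>R ones). dist x a)"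
    proof (rule cINF_greatest)
      fix a assume "a \<in> range (\<lambda>k. k *\<^sub>R (ones::real^'n))"
      then obtain k where a: "a = k *\<^sub>R ones" by auto
      have "Vf x \<le> (dist x (k *\<^sub>R ones))^2" using dist_const_sq[of x k] by simp
      thus "sqrt (Vf x) \<le> dist x a" unfolding a
        using real_le_lsqrt by fastforce
    qed auto
    hence "sqrt (Vf x) \<le> infdist x (range (\<lambda>k. k *\<^sub>R ones))" by (simp add: infdist_def)
    thus "sqrt (Vf x) \<le> infdist x {x::real^'n. \<forall>i j. x $ i = x $ j}" by (simp add: diag_eq)
  qed
qed


lemma Vf_nonneg: "Vf (x::real^'n::finite) \<ge> 0"
  using dist_const_sq[of x "(x \<bullet> ones) / real CARD('n)"] by (simp, metis zero_le_power2)

lemma Vf_deriv: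
  fixes y :: "real \<Rightarrow> real^'n::finite"
  assumes "(y has_vector_derivative v) (at t within S)" and "v \<bullet> ones = 0"
  shows "((\<lambda>t. Vf (y t)) has_derivative (\<lambda>h. h * (2 * (y t \<bullet> v)))) (at t within S)"
proof -
  have yd: "(y has_derivative (\<lambda>h. h *\<^sub>R v)) (at t within S)"
    using assms(1) by (simp add: has_vector_derivative_def)
  show ?thesis
    unfolding Vf_def
  apply (rule has_derivative_eq_rhs)
   apply (rule has_derivative_diff)
  apply (rule has_derivative_inner[OF yd yd])
   apply (rule has_derivative_divide')
  apply (rule has_derivative_power)
  apply (rule has_derivative_inner[OF yd has_derivative_const])
  apply (rule has_derivative_const)
  apply simp
  using assms(2) by (auto simp: fun_eq_iff algebra_simps inner_commute)
qed

theorem lemma5p2: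
  fixes E :: "('n::finite \<times> 'n) set"
    and etyp :: "'n \<times> 'n \<Rightarrow> 'k"
    and ctyp :: "'n \<Rightarrow> 'c"
    and \<phi> :: "'k \<Rightarrow> real \<Rightarrow> real"
    and f :: "real ^ 'n \<Rightarrow> real ^ 'n"
    and \<epsilon> :: real
  assumes net: "coupled_cell_network E etyp ctyp"
    and conn: "network_connected E"
    and hom: "homogeneous E etyp"
    and bidir: "bidirected E etyp"
    and f_def: "\<And>x. f x = (\<chi> c. \<Sum>d\<in>{d. (d, c) \<in> E}. \<phi> (etyp (c, d)) (x $ d - x $ c))"
    and odd: "\<And>\<xi> a. \<xi> \<in> etyp ` E \<Longrightarrow> \<phi> \<xi> (- a) = - \<phi> \<xi> a"
    and C1: "\<And>\<xi>. \<xi> \<in> etyp ` E \<Longrightarrow>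
               \<exists>\<phi>'. (\<forall>a. (\<phi> \<xi> has_real_derivative \<phi>' a) (at a)) \<and> continuous_on UNIV \<phi>'"
    and eps_pos: "\<epsilon> > 0"
    and sign: "\<And>\<xi> \<alpha>. \<xi> \<in> etyp ` E \<Longrightarrow> \<alpha> \<noteq> 0 \<Longrightarrow> \<bar>\<alpha>\<bar> < \<epsilon> \<Longrightarrow> \<alpha> * \<phi> \<xi> \<alpha> > 0"
  shows "(\<forall>(y :: real \<Rightarrow> real ^ 'n) T. T \<ge> 0 \<longrightarrow> y 0 \<in> max_cyl E \<epsilon> \<longrightarrow>
            (\<forall>t \<in> {0..T}. (y has_vector_derivative f (y t)) (at t within {0..T})) \<longrightarrow>
            (\<forall>t \<in> {0..T}. y t \<in> max_cyl E \<epsilon>))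
       \<and> (\<forall>x \<in> max_cyl E \<epsilon>. f x = 0 \<longleftrightarrow> x \<in> diag)"
  proof -
  have sym: "\<And>i j. (i,j)\<in>E \<longleftrightarrow> (j,i)\<in>E" using bidir by (simp add: bidirected_def)
  have esym: "\<And>i j. (i,j)\<in>E \<Longrightarrow> etyp (i,j) = etyp (j,i)" using bidir by (simp add: bidirected_def)
  define G where "G x c d = \<phi> (etyp (c,d)) (x $ d - x $ c)" for x :: "real^'n" and c d
  have fc: "f x $ c = (\<Sum>d\<in>UNIV. if (d,c)\<in>E then G x c d else 0)" for x c
    by (simp add: f_def G_def flip: sum.inter_filter)
  have anti: "G x d c = - G x c d" if "(d,c)\<in>E" for x c d
  proof -
    have cd: "(c,d) \<in> E" using that sym by blast
    have "G x d c = \<phi> (etyp (c,d)) (- (x $ d - x $ c))"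
      using esym[OF that] by (simp add: G_def)
    also have "\<dots> = - G x c d"
    proof -
      have "etyp (c,d) \<in> etyp ` E" using cd by blast
      from odd[OF this, of "x $ d - x $ c"] show ?thesis by (simp add: G_def)
    qed
    finally show ?thesis .
  qed
  have sumf: "f x \<bullet> ones = 0" for x
    unfolding inner_vec_def ones_def by (simp add: fc antisym_sum(1)[OF sym anti])
  have xf_le: "y \<bullet> f y \<le> 0" if B: "\<forall>(c,d)\<in>E. \<bar>y $ d - y $ c\<bar> < \<epsilon>" for y
  proof -
    have "2 * (y \<bullet> f y) = (\<Sum>c\<in>UNIV. \<Sum>d\<in>UNIV. if (d,c)\<in>E then (y $ c - y $ d) * G y c d else 0)"
      unfolding inner_vec_def fc
      using antisym_sum(2)[OF sym anti[where x=y], where x="\<lambda>c. y $ c"]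
      by (simp add: sum_distrib_left if_distrib cong: if_cong)
    also have "\<dots> \<le> 0"
    proof (intro sum_nonpos, clarsimp)
      fix c d assume dc: "(d,c) \<in> E"
      have cd: "(c,d) \<in> E" using dc sym by blast
      let ?a = "y $ d - y $ c"
      show "(y $ c - y $ d) * G y c d \<le> 0"
      proof (cases "?a = 0")
        case True thus ?thesis by simp
      next
        case False
        have "\<bar>?a\<bar> < \<epsilon>" using B dc by (auto simp: abs_minus_commute)
        hence "?a * \<phi> (etyp (c,d)) ?a > 0" using sign[of "etyp (c,d)" ?a] False cd by auto
        thus ?thesis by (simp add: G_def algebra_simps)
      qed
    qed
    finally show ?thesis by simp
  qed
  have hyp: "hypercyl r = {x::real^'n. sqrt (Vf x) < r}" for r
    by (simp add: hypercyl_def diag_def infdist_diag)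
  have mc: "\<exists>r. x \<in> hypercyl r \<and> (\<forall>x \<in> hypercyl r. \<forall>(c, d) \<in> E. \<bar>x $ d - x $ c\<bar> < \<epsilon>)"
    if "x \<in> max_cyl E \<epsilon>" for x
    using that unfolding max_cyl_def by blast
  have part1: "\<forall>t \<in> {0..T}. y t \<in> max_cyl E \<epsilon>"
    if T0: "T \<ge> 0" and y0: "y 0 \<in> max_cyl E \<epsilon>"
      and yd: "\<forall>t \<in> {0..T}. (y has_vector_derivative f (y t)) (at t within {0..T})" for y T
  proof -
    obtain r where r0: "y 0 \<in> hypercyl r" and rv: "\<forall>x \<in> hypercyl r. \<forall>(c, d) \<in> E. \<bar>x $ d - x $ c\<bar> < \<epsilon>"
      using mc[OF y0] by blast
    define W where "W t = Vf (y t)" for t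
    have Wd: "(W has_derivative (\<lambda>h. h * (2 * (y t \<bullet> f (y t))))) (at t within {0..T})"
      if "t \<in> {0..T}" for t
      unfolding W_def by (rule Vf_deriv[OF yd[rule_format, OF that] sumf])
    have Wc: "continuous_on {0..T} W"
      unfolding continuous_on_eq_continuous_within
    proof
      fix t assume "t \<in> {0..T}"
      show "continuous (at t within {0..T}) W" by (rule has_derivative_continuous[OF Wd[OF \<open>t \<in> {0..T}\<close>]])
    qed
    have W0: "W 0 < r^2" "r > 0"
    proof -
      have s: "sqrt (W 0) < r" using r0 by (simp add: hyp W_def)
      have nn: "0 \<le> W 0" by (simp add: W_def Vf_nonneg)
      have "0 \<le> sqrt (W 0)" using nn by simp
      thus rp: "r > 0" using s by linarith
      have "sqrt (W 0) < sqrt (r^2)" using s rp by simp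
      thus "W 0 < r^2" by (simp only: real_sqrt_less_iff)
    qed
    have inH: "y t \<in> hypercyl r" if "t \<in> {0..T}" "W t < r^2" for t
    proof -
      have "sqrt (W t) < sqrt (r^2)" using that(2) by (simp only: real_sqrt_less_iff)
      hence "sqrt (W t) < r" using W0(2) by simp
      thus ?thesis by (simp add: hyp W_def)
    qed
    have "\<forall>t \<in> {0..T}. W t < r^2"
    proof (rule ccontr)
      assume "\<not> ?thesis"
      define S where "S = {t\<in>{0..T}. r^2 \<le> W t}"
      have Sne: "S \<noteq> {}" using \<open>\<not> _\<close> by (auto simp: S_def not_less)
      have Scl: "closed S"
      proof -
        have "closed ({0..T} \<inter> W -` {r^2..})"
          by (rule continuous_closed_preimage[OF Wc]) auto
        moreover have "S = {0..T} \<inter> W -` {r^2..}" by (auto simp: S_def)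
        ultimately show ?thesis by simp
      qed
      have Sbd: "bdd_below S" unfolding bdd_below_def S_def by (rule exI[of _ 0]) simp
      define t2 where "t2 = Inf S"
      have t2S: "t2 \<in> S" unfolding t2_def by (rule closed_contains_Inf[OF Sne Sbd Scl])
      have t2pos: "t2 > 0"
      proof -
        have "t2 \<noteq> 0" using t2S W0 by (auto simp: S_def)
        thus ?thesis using t2S by (auto simp: S_def)
      qed
      have before: "W s < r^2" if "0 \<le> s" "s < t2" for s
      proof (rule ccontr)
        assume "\<not> W s < r^2"
        hence "s \<in> S" using that t2S by (auto simp: S_def)
        hence "t2 \<le> s" unfolding t2_def using Sbd by (rule cInf_lower)
        thus False using that by simp
      qed
      have t2T: "t2 \<le> T" using t2S by (auto simp: S_def)
      obtain \<xi> where \<xi>: "\<xi> \<in> {0<..<t2}" and eq: "W t2 - W 0 = (t2 - 0) * (2 * (y \<xi> \<bullet> f (y \<xi>)))"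
      proof -
        have "\<exists>x\<in>{0<..<t2}. W t2 - W 0 = (\<lambda>h. h * (2 * (y x \<bullet> f (y x)))) (t2 - 0)"
        proof (rule mvt_simple[OF t2pos])
          fix x assume "0 \<le> x" "x \<le> t2"
          thus "(W has_derivative (\<lambda>h. h * (2 * (y x \<bullet> f (y x))))) (at x within {0..t2})"
            using Wd[of x] t2T by (auto intro: has_derivative_subset)
        qed
        thus ?thesis using that by auto
      qed
      have "y \<xi> \<in> hypercyl r" using \<xi> t2T before[of \<xi>] by (intro inH) auto
      hence "y \<xi> \<bullet> f (y \<xi>) \<le> 0" using rv xf_le by blast
      hence "t2 * (2 * (y \<xi> \<bullet> f (y \<xi>))) \<le> 0" using t2pos by (intro mult_nonneg_nonpos) auto
      hence "W t2 \<le> W 0" using eq by simp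
      thus False using t2S W0 by (auto simp: S_def)
    qed
    hence allH: "y t \<in> hypercyl r" if "t \<in> {0..T}" for t using inH that by simp
    have mem: "hypercyl r \<in> {hypercyl r | r. \<forall>x \<in> hypercyl r. \<forall>(c, d) \<in> E. \<bar>x $ d - x $ c\<bar> < \<epsilon>}"
      using rv by blast
    show ?thesis unfolding max_cyl_def using UnionI[OF mem allH] by simp
  qed
  have part2: "f x = 0 \<longleftrightarrow> x \<in> diag" if xm: "x \<in> max_cyl E \<epsilon>" for x
  proof
    assume "x \<in> diag"
    hence eqs: "x $ i = x $ j" for i j by (simp add: diag_def)
    have "G x c d = 0" if "(d,c) \<in> E" for c d
    proof -
      have "(c,d) \<in> E" using that sym by blast
      hence "\<phi> (etyp (c,d)) 0 = - \<phi> (etyp (c,d)) 0" using odd[of "etyp (c,d)" 0] by auto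
      thus ?thesis using eqs[of d c] by (simp add: G_def)
    qed
    thus "f x = 0" by (auto simp: vec_eq_iff fc intro!: sum.neutral)
  next
    assume f0: "f x = 0"
    obtain r where "x \<in> hypercyl r" and rv: "\<forall>x \<in> hypercyl r. \<forall>(c, d) \<in> E. \<bar>x $ d - x $ c\<bar> < \<epsilon>"
      using mc[OF xm] by blast
    hence B: "\<forall>(c, d) \<in> E. \<bar>x $ d - x $ c\<bar> < \<epsilon>" by blast
    define M where "M = Max (range (\<lambda>i. x $ i))"
    have leM: "x $ i \<le> M" for i by (simp add: M_def)
    have "M \<in> range (\<lambda>i. x $ i)" unfolding M_def by (rule Max_in) auto
    then obtain c0 where c0: "x $ c0 = M" by auto
    have stepM: "x $ d = M" if "x $ c = M" "(d,c) \<in> E" for c d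
    proof (rule ccontr)
      assume ne: "x $ d \<noteq> M"
      have cd: "(c,d) \<in> E" using that sym by blast
      have nonpos: "(if (d',c)\<in>E then G x c d' else 0) \<le> 0" for d'
      proof (cases "(d',c)\<in>E")
        case True
        have cd': "(c,d') \<in> E" using True sym by blast
        have im: "etyp (c,d') \<in> etyp ` E" using imageI[OF cd'] .
        show ?thesis
        proof (cases "x $ d' = x $ c")
          case True2: True
          have "\<phi> (etyp (c,d')) 0 = - \<phi> (etyp (c,d')) 0" using odd[OF im, of 0] by simp
          hence "\<phi> (etyp (c,d')) 0 = 0" by simp
          thus ?thesis using True True2 by (simp add: G_def)
        next
          case False
          let ?a = "x $ d' - x $ c"
          have "\<bar>x $ c - x $ d'\<bar> < \<epsilon>" using bspec[OF B True] by simp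
          hence ab: "\<bar>?a\<bar> < \<epsilon>" by (simp add: abs_minus_commute)
          have a0: "?a \<noteq> 0" using False by simp
          have pos: "?a * \<phi> (etyp (c,d')) ?a > 0" by (rule sign[OF im a0 ab])
          have "x $ d' \<le> x $ c" using leM[of d'] that(1) by simp
          hence neg: "?a < 0" using False by simp
          have "\<phi> (etyp (c,d')) ?a < 0" using pos neg by (simp add: zero_less_mult_iff)
          thus ?thesis using True by (simp add: G_def)
        qed
      qed simp
      have s0: "(\<Sum>d'\<in>UNIV. if (d',c)\<in>E then G x c d' else 0) = 0"
        using fc[of x c] f0 by simp
      have s1: "(\<Sum>d'\<in>UNIV. - (if (d',c)\<in>E then G x c d' else 0)) = 0"
        by (simp only: sum_negf s0 minus_zero)
      have nn: "\<And>d'. d' \<in> UNIV \<Longrightarrow> 0 \<le> - (if (d',c)\<in>E then G x c d' else 0)"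
        using nonpos by (simp only: neg_0_le_iff_le)
      have "\<forall>d'\<in>UNIV. - (if (d',c)\<in>E then G x c d' else 0) = 0"
        by (rule sum_nonneg_eq_0_iff[THEN iffD1, OF finite_class.finite_UNIV nn s1])
      hence "- (if (d,c)\<in>E then G x c d else 0) = 0" by blast
      hence g0: "G x c d = 0" using that(2) by simp
      let ?a = "x $ d - x $ c"
      have "?a \<noteq> 0" using ne that(1) by auto
      moreover have "\<bar>x $ c - x $ d\<bar> < \<epsilon>" using bspec[OF B that(2)] by simp
      hence "\<bar>?a\<bar> < \<epsilon>" by (simp add: abs_minus_commute)
      ultimately have "?a * \<phi> (etyp (c,d)) ?a > 0" using sign[OF imageI[OF cd]] by blast
      thus False using g0 by (simp add: G_def)
    qed
    have reach: "x $ d = M" if "(c,d) \<in> (E \<union> E\<inverse>)\<^sup>*" "x $ c = M" for c d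
      using that
    proof (induction rule: rtrancl_induct)
      case base thus ?case by simp
    next
      case (step d e)
      hence "x $ d = M" by simp
      from step(2) show ?case
      proof
        assume "(d,e) \<in> E" hence "(e,d) \<in> E" using sym by blast
        thus ?thesis using stepM[OF \<open>x $ d = M\<close>] by blast
      next
        assume "(d,e) \<in> E\<inverse>" hence "(e,d) \<in> E" by simp
        thus ?thesis using stepM[OF \<open>x $ d = M\<close>] by blast
      qed
    qed
    have "x $ d = M" for d
    proof -
      have "(c0, d) \<in> (E \<union> E\<inverse>)\<^sup>*" using conn by (simp add: network_connected_def)
      thus ?thesis using c0 by (rule reach)
    qed
    thus "x \<in> diag" by (simp add: diag_def)
  qed
  show ?thesis
  proof (intro conjI allI impI ballI)
    fix y :: "real \<Rightarrow> real^'n" and T t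
    assume a: "0 \<le> T" "y 0 \<in> max_cyl E \<epsilon>"
      "\<forall>t\<in>{0..T}. (y has_vector_derivative f (y t)) (at t within {0..T})" "t \<in> {0..T}"
    show "y t \<in> max_cyl E \<epsilon>" using part1[OF a(1) a(2) a(3)] a(4) by blast
  next
    fix x assume "x \<in> max_cyl E \<epsilon>"
    thus "(f x = 0) = (x \<in> diag)" by (rule part2)
  qed
qed

end
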